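(* Let $\Sigma_\infty$, $\succeq^*$ and $\{\succeq^k\}$ be as in the following setting: $\Sigma_\infty$ is the sequence of experiments whose existence is asserted in the preference-recovery theorem (so that any continuous weakly monotone preferences $\succeq^k$ strongly rationalizing $(\Sigma_k,c_{\succeq^*})$, for a continuous weakly monotone $\succeq^*$, satisfy $\succeq^k\to\succeq^*$ in closed convergence); $\succeq^*$ is a continuous weakly monotone preference on $X$; and each $\succeq^k$ is a continuous weakly monotone preference strongly rationalizing $(\Sigma_k,c_{\succeq^*})$. If in addition $\succeq^*$ and each $\succeq^k$ are standard, with standard representations $(V,u)$ and $(V^k,u^k)$ respectively, then $(V^k,u^k)\to(V,u)$ as $k\to\infty$ in the compact-open topology (i.e. uniformly on compact sets).
   Context: $S$ is a finite nonempty set, $a<b$ reals, $\Delta([a,b])$ the Borel probability measures on $[a,b]$ with the weak topology, $X=\Delta([a,b])^S$ with the product topology. First-order stochastic dominance $p\ge q$: $\int h\,dp\ge\int h\,dq$ for all bounded continuous nondecreasing $h$; for acts $f\ge g$ iff $f(s)\ge g(s)$ for all $s$. A preference is a complete, transitive relation closed in $X\times X$; weakly monotone if $f\ge g\Rightarrow f\succeq g$. Let $\mathcal U$ be the set of continuous nondecreasing $u:[a,b]\to\mathbf{R}$ with $u(a)=0,u(b)=1$. $(V,u)$ is a standard representation if $V:X\to\mathbf{R}$ is continuous, $u\in\mathcal U$, and $V(p,\dots,p)=\int u\,dp$ for all $p$; a preference is standard if weakly monotone and represented by $V$ for some standard representation $(V,u)$. A sequence of experiments is a sequence $\{B_i\}$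 of unordered pairs in $X$, $\Sigma_k=\{B_1,\dots,B_k\}$, $B=\bigcup_iB_i$ dense in $X$, every pair from $B$ appearing as some $B_k$. $c_\succeq(A)=\{x\in A:x\succeq y\ \forall y\in A\}$; $\succeq^k$ strongly rationalizes $(\Sigma_k,c)$ if $c(B_i)=c_{\succeq^k}(B_i)$ for all $B_i\in\Sigma_k$. Closed convergence of closed sets $F^n\to F$ in $X\times X$ means $\mathrm{Li}=F=\mathrm{Ls}$, where $\mathrm{Li}$ ($\mathrm{Ls}$) is the set of points every neighborhood of which meets $F^n$ for all large $n$ (infinitely many $n$). *)

theory Defs
  imports "HOL-Probability.Probability"
begin

type_synonym 's act = "'s \<Rightarrow> real measure"

definition Delta :: "real \<Rightarrow> real \<Rightarrow> real measure set" where
  "Delta a b = {p. prob_space p \<and> space p = {a..b} \<and> sets p = sets (restrict_space borel {a..b})}"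

definition Cab :: "real \<Rightarrow> real \<Rightarrow> (real \<Rightarrow> real) set" where
  "Cab a b = {h. continuous_on {a..b} h}"

definition weak_top :: "real \<Rightarrow> real \<Rightarrow> real measure topology" where
  "weak_top a b = pullback_topology (Delta a b)
      (\<lambda>p. restrict (\<lambda>h. integral\<^sup>L p h) (Cab a b))
      (product_topology (\<lambda>_. euclideanreal) (Cab a b))"

definition Xtop :: "real \<Rightarrow> real \<Rightarrow> ('s::finite) act topology" where
  "Xtop a b = product_topology (\<lambda>_. weak_top a b) UNIV"

abbreviation Xset :: "real \<Rightarrow> real \<Rightarrow> ('s::finite) act set" where
  "Xset a b \<equiv> topspace (Xtop a b)"

definition fosd :: "real \<Rightarrow> real \<Rightarrow> real measure \<Rightarrow> real measure \<Rightarrow> bool" where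
  "fosd a b p q \<longleftrightarrow> (\<forall>h::real\<Rightarrow>real. continuous_on {a..b} h \<and> mono_on {a..b} h \<longrightarrow>
      integral\<^sup>L p h \<ge> integral\<^sup>L q h)"

definition fosd_act :: "real \<Rightarrow> real \<Rightarrow> ('s::finite) act \<Rightarrow> 's act \<Rightarrow> bool" where
  "fosd_act a b f g \<longleftrightarrow> (\<forall>s. fosd a b (f s) (g s))"

definition preference :: "real \<Rightarrow> real \<Rightarrow> (('s::finite) act \<times> 's act) set \<Rightarrow> bool" where
  "preference a b R \<longleftrightarrow>
     R \<subseteq> Xset a b \<times> Xset a b \<and>
     (\<forall>f\<in>Xset a b. \<forall>g\<in>Xset a b. (f,g) \<in> R \<or> (g,f) \<in> R) \<and>
     (\<forall>f g h. (f,g) \<in> R \<and> (g,h) \<in> R \<longrightarrow> (f,h) \<in> R) \<and>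
     closedin (prod_topology (Xtop a b) (Xtop a b)) R"

definition weakly_monotone :: "real \<Rightarrow> real \<Rightarrow> (('s::finite) act \<times> 's act) set \<Rightarrow> bool" where
  "weakly_monotone a b R \<longleftrightarrow>
     (\<forall>f\<in>Xset a b. \<forall>g\<in>Xset a b. fosd_act a b f g \<longrightarrow> (f,g) \<in> R)"

definition Uset :: "real \<Rightarrow> real \<Rightarrow> (real \<Rightarrow> real) set" where
  "Uset a b = {u. continuous_on {a..b} u \<and> mono_on {a..b} u \<and> u a = 0 \<and> u b = 1}"

definition standard_rep :: "real \<Rightarrow> real \<Rightarrow> (('s::finite) act \<Rightarrow> real) \<Rightarrow> (real \<Rightarrow> real) \<Rightarrow> bool" where
  "standard_rep a b V u \<longleftrightarrow>
     continuous_map (Xtop a b) euclideanreal V \<and> u \<in> Uset a b \<and>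
     (\<forall>p\<in>Delta a b. V (\<lambda>_. p) = integral\<^sup>L p u)"

definition represents :: "real \<Rightarrow> real \<Rightarrow> (('s::finite) act \<times> 's act) set \<Rightarrow> ('s act \<Rightarrow> real) \<Rightarrow> bool" where
  "represents a b R V \<longleftrightarrow> (\<forall>f\<in>Xset a b. \<forall>g\<in>Xset a b. (f,g) \<in> R \<longleftrightarrow> V f \<ge> V g)"

text \<open>Sequence of experiments (indexed from 0; \<Sigma>_k = {B i | i < k}).\<close>
definition seq_experiments :: "real \<Rightarrow> real \<Rightarrow> (nat \<Rightarrow> ('s::finite) act set) \<Rightarrow> bool" where
  "seq_experiments a b B \<longleftrightarrow>
     (\<forall>i. \<exists>x\<in>Xset a b. \<exists>y\<in>Xset a b. x \<noteq> y \<and> B i = {x, y}) \<and>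
     (Xtop a b) closure_of (\<Union>(range B)) = Xset a b \<and>
     (\<forall>x\<in>\<Union>(range B). \<forall>y\<in>\<Union>(range B). x \<noteq> y \<longrightarrow> (\<exists>k. B k = {x, y}))"

definition choice :: "('a \<times> 'a) set \<Rightarrow> 'a set \<Rightarrow> 'a set" where
  "choice R A = {x\<in>A. \<forall>y\<in>A. (x,y) \<in> R}"

definition strongly_rationalizes ::
  "('a \<times> 'a) set \<Rightarrow> (nat \<Rightarrow> 'a set) \<Rightarrow> nat \<Rightarrow> ('a set \<Rightarrow> 'a set) \<Rightarrow> bool" where
  "strongly_rationalizes R B k c \<longleftrightarrow> (\<forall>i<k. c (B i) = choice R (B i))"

definition Li :: "'a topology \<Rightarrow> (nat \<Rightarrow> 'a set) \<Rightarrow> 'a set" where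
  "Li T F = {x\<in>topspace T. \<forall>U. openin T U \<and> x \<in> U \<longrightarrow> (\<forall>\<^sub>F n in sequentially. F n \<inter> U \<noteq> {})}"

definition Ls :: "'a topology \<Rightarrow> (nat \<Rightarrow> 'a set) \<Rightarrow> 'a set" where
  "Ls T F = {x\<in>topspace T. \<forall>U. openin T U \<and> x \<in> U \<longrightarrow> (\<exists>\<^sub>F n in sequentially. F n \<inter> U \<noteq> {})}"

definition closed_conv :: "'a topology \<Rightarrow> (nat \<Rightarrow> 'a set) \<Rightarrow> 'a set \<Rightarrow> bool" where
  "closed_conv T F G \<longleftrightarrow> Li T F = G \<and> Ls T F = G"

definition recovers :: "real \<Rightarrow> real \<Rightarrow> (nat \<Rightarrow> ('s::finite) act set) \<Rightarrow> bool" where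
  "recovers a b B \<longleftrightarrow>
     (\<forall>R Rk. preference a b R \<and> weakly_monotone a b R \<and>
        (\<forall>k. preference a b (Rk k) \<and> weakly_monotone a b (Rk k) \<and>
             strongly_rationalizes (Rk k) B k (choice R))
        \<longrightarrow> closed_conv (prod_topology (Xtop a b) (Xtop a b)) Rk R)"

end

theory Submission
  imports Defs
begin

lemma Xset_eq: "Xset a b = {f. \<forall>s. f s \<in> Delta a b}"
  by (auto simp: Xtop_def weak_top_def topspace_pullback_topology PiE_def Pi_def)


lemma Delta_meas:
  fixes h :: "real \<Rightarrow> real"
  assumes p: "p \<in> Delta a b" and h: "continuous_on {a..b} h"
  shows "h \<in> borel_measurable p"
proof -
  have 1: "h \<in> borel_measurable (restrict_space borel {a..b})"
    using borel_measurable_continuous_on_restrict[OF h] .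
  have 2: "sets p = sets (restrict_space borel {a..b})" using p unfolding Delta_def by blast
  show ?thesis using measurable_cong_sets[OF 2 refl] 1 by blast
qed

lemma Delta_int_bounds:
  fixes h :: "real \<Rightarrow> real"
  assumes p: "p \<in> Delta a b" and h: "continuous_on {a..b} h" and mo: "mono_on {a..b} h"
    and ab: "a \<le> b"
  shows "integrable p h" "h a \<le> integral\<^sup>L p h" "integral\<^sup>L p h \<le> h b"
proof -
  have ps: "prob_space p" and sp: "space p = {a..b}" using p unfolding Delta_def by blast+
  have hb: "x \<in> {a..b} \<Longrightarrow> h a \<le> h x \<and> h x \<le> h b" for x
    using mo ab by (auto intro: mono_onD)
  have fm: "finite_measure p" using ps unfolding prob_space_def by blast
  have bd: "AE x in p. norm (h x) \<le> \<bar>h a\<bar> + \<bar>h b\<bar>"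
  proof (rule AE_I2)
    fix x assume "x \<in> space p"
    then have "h a \<le> h x" "h x \<le> h b" using hb sp by auto
    then show "norm (h x) \<le> \<bar>h a\<bar> + \<bar>h b\<bar>" unfolding real_norm_def by arith
  qed
  show int: "integrable p h"
    using finite_measure.integrable_const_bound[OF fm bd Delta_meas[OF p h]] .
  have "AE x in p. h a \<le> h x"
    by (rule AE_I2) (use hb sp in blast)
  then show "h a \<le> integral\<^sup>L p h"
    using prob_space.integral_ge_const[OF ps int] by blast
  have "AE x in p. h x \<le> h b"
    by (rule AE_I2) (use hb sp in blast)
  then show "integral\<^sup>L p h \<le> h b"
    using prob_space.integral_le_const[OF ps int] by blast
qed

definition mix :: "real \<Rightarrow> real \<Rightarrow> real \<Rightarrow> real measure" where
  "mix a b \<beta> = distr (measure_pmf (bernoulli_pmf \<beta>)) (restrict_space borel {a..b}) (\<lambda>t. if t then b else a)"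

lemma mix_meas: "(a::real) \<le> b \<Longrightarrow> (\<lambda>t. if t then b else a) \<in> measurable (measure_pmf (bernoulli_pmf \<beta>)) (restrict_space borel {a..b})"
  by (auto simp: space_restrict_space)

lemma mix_Delta: assumes "a \<le> b" shows "mix a b \<beta> \<in> Delta a b"
  unfolding Delta_def mix_def
  using prob_space.prob_space_distr[OF prob_space_measure_pmf mix_meas[OF assms]] by (auto simp: space_restrict_space)

lemma mix_int:
  fixes h :: "real \<Rightarrow> real"
  assumes ab: "a \<le> b" and h: "continuous_on {a..b} h" and b0: "0 \<le> \<beta>" and b1: "\<beta> \<le> 1"
  shows "integral\<^sup>L (mix a b \<beta>) h = \<beta> * h b + (1 - \<beta>) * h a"
proof -
  have "integral\<^sup>L (mix a b \<beta>) h = (\<integral>t. h (if t then b else a) \<partial>measure_pmf (bernoulli_pmf \<beta>))"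
    unfolding mix_def
    by (rule integral_distr[OF mix_meas[OF ab] borel_measurable_continuous_on_restrict[OF h]])
  also have "\<dots> = (\<Sum>t\<in>UNIV. h (if t then b else a) * pmf (bernoulli_pmf \<beta>) t)"
    by (rule integral_measure_pmf_real) auto
  also have "\<dots> = \<beta> * h b + (1 - \<beta>) * h a"
    using b0 b1 by (simp add: UNIV_bool)
  finally show ?thesis .
qed

definition dl :: "real \<Rightarrow> real \<Rightarrow> real \<Rightarrow> real measure" where
  "dl a b x = return (restrict_space borel {a..b}) x"

lemma dl_Delta: "x \<in> {a..b} \<Longrightarrow> dl a b x \<in> Delta a b"
  unfolding Delta_def dl_def
  by (auto intro!: prob_space_return simp: space_restrict_space)

lemma dl_int:
  fixes h :: "real \<Rightarrow> real" assumes "x \<in> {a..b}" "continuous_on {a..b} h"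
  shows "integral\<^sup>L (dl a b x) h = h x"
  unfolding dl_def
  by (rule integral_return) (use assms borel_measurable_continuous_on_restrict[OF assms(2)] in \<open>auto simp: space_restrict_space\<close>)



lemma dl_cont: "continuous_map (top_of_set {a..b}) (Xtop a b) (\<lambda>x (_::'s::finite). dl a b x)"
  unfolding Xtop_def continuous_map_componentwise_UNIV
proof
  fix s :: 's
  show "continuous_map (top_of_set {a..b}) (weak_top a b) (\<lambda>x. dl a b x)"
    unfolding weak_top_def
  proof (rule continuous_map_pullback')
    show "topspace (top_of_set {a..b}) \<subseteq> (\<lambda>x. dl a b x) -` Delta a b"
      using dl_Delta by auto
    show "continuous_map (top_of_set {a..b}) (product_topology (\<lambda>_. euclideanreal) (Cab a b))
      ((\<lambda>p. restrict (\<lambda>h. integral\<^sup>L p h) (Cab a b)) \<circ> (\<lambda>x. dl a b x))"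
      unfolding continuous_map_componentwise
    proof (intro conjI ballI)
      show "((\<lambda>p. restrict (\<lambda>h. integral\<^sup>L p h) (Cab a b)) \<circ> (\<lambda>x. dl a b x)) ` topspace (top_of_set {a..b}) \<subseteq> extensional (Cab a b)"
        by auto
      fix h assume h: "h \<in> Cab a b"
      have "continuous_map (top_of_set {a..b}) euclideanreal h"
        using h by (simp add: Cab_def)
      then show "continuous_map (top_of_set {a..b}) euclideanreal
          (\<lambda>x. ((\<lambda>p. restrict (\<lambda>h. integral\<^sup>L p h) (Cab a b)) \<circ> (\<lambda>x. dl a b x)) x h)"
        by (rule continuous_map_eq) (use h dl_int in \<open>auto simp: Cab_def\<close>)
    qed
  qed
qed



lemma abstract_unif:
  fixes T :: "'x topology" and R :: "('x\<times>'x) set" and Rk :: "nat \<Rightarrow> ('x\<times>'x) set"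
    and V :: "'x \<Rightarrow> real" and Vk :: "nat \<Rightarrow> 'x \<Rightarrow> real" and m :: "real \<Rightarrow> 'x"
  assumes Ls: "Ls (prod_topology T T) Rk = R"
    and Vc: "continuous_map T euclideanreal V"
    and repR: "\<And>f g. f\<in>topspace T \<Longrightarrow> g\<in>topspace T \<Longrightarrow> (f,g)\<in>R \<longleftrightarrow> V g \<le> V f"
    and repRk: "\<And>k f g. f\<in>topspace T \<Longrightarrow> g\<in>topspace T \<Longrightarrow> (f,g)\<in>Rk k \<longleftrightarrow> Vk k g \<le> Vk k f"
    and m: "\<And>\<beta>. 0\<le>\<beta> \<Longrightarrow> \<beta>\<le>1 \<Longrightarrow> m \<beta> \<in> topspace T \<and> V (m \<beta>) = \<beta> \<and> (\<forall>k. Vk k (m \<beta>) = \<beta>)"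
    and bnd: "\<And>f k. f\<in>topspace T \<Longrightarrow> 0 \<le> Vk k f \<and> Vk k f \<le> 1 \<and> 0 \<le> V f \<and> V f \<le> 1"
    and K: "compactin T K"
  shows "uniform_limit K Vk V sequentially"
  unfolding uniform_limit_iff
proof (intro allI impI)
  fix e :: real assume e: "e > 0"
  define P where "P N \<longleftrightarrow> openin T N \<and> (\<forall>\<^sub>F n in sequentially. \<forall>g\<in>N. \<bar>Vk n g - V g\<bar> < e)" for N
  have opV: "openin T {g\<in>topspace T. V g \<in> A}" if "open A" for A
    using openin_continuous_map_preimage[OF Vc] that by (simp add: openin_open)
  have notLs: "\<exists>U1 U2. openin T U1 \<and> openin T U2 \<and> x \<in> U1 \<and> y \<in> U2 \<and>
      (\<forall>\<^sub>F n in sequentially. \<forall>g\<in>U1. \<forall>h\<in>U2. (g,h) \<notin> Rk n)"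
    if xy: "x \<in> topspace T" "y \<in> topspace T" "(x,y) \<notin> R" for x y
  proof -
    have "(x,y) \<notin> Ls (prod_topology T T) Rk" using Ls xy by simp
    then obtain U where U: "openin (prod_topology T T) U" "(x,y) \<in> U"
        "\<not> (\<exists>\<^sub>F n in sequentially. Rk n \<inter> U \<noteq> {})"
    proof -
      have "(x,y) \<in> topspace (prod_topology T T)" using xy(1,2) by simp
      with \<open>(x,y) \<notin> Ls (prod_topology T T) Rk\<close> show ?thesis
        unfolding Ls_def using that by blast
    qed
    from U(3) have ev: "\<forall>\<^sub>F n in sequentially. Rk n \<inter> U = {}"
      by (simp add: not_frequently)
    from U(1,2) obtain U1 U2 where UU: "openin T U1" "openin T U2" "x \<in> U1" "y \<in> U2" "U1 \<times> U2 \<subseteq> U"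
      unfolding openin_prod_topology_alt by blast
    have "\<forall>\<^sub>F n in sequentially. \<forall>g\<in>U1. \<forall>h\<in>U2. (g,h) \<notin> Rk n"
    proof (rule eventually_mono[OF ev])
      fix n assume "Rk n \<inter> U = {}"
      then show "\<forall>g\<in>U1. \<forall>h\<in>U2. (g,h) \<notin> Rk n" using UU(5) by blast
    qed
    with UU show ?thesis by blast
  qed
  have key: "\<exists>N. P N \<and> f \<in> N" if f: "f \<in> topspace T" for f
  proof -
    define \<alpha> where "\<alpha> = V f"
    define W where "W = {g\<in>topspace T. V g \<in> {\<alpha> - e/3<..<\<alpha> + e/3}}"
    have W: "openin T W" "f \<in> W" using opV[of "{\<alpha> - e/3<..<\<alpha> + e/3}"] e f
      by (auto simp: W_def \<alpha>_def)
    have up: "\<exists>N1. openin T N1 \<and> f \<in> N1 \<and> (\<forall>\<^sub>F n in sequentially. \<forall>g\<in>N1. Vk n g < V g + e)"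
    proof (cases "\<alpha> + e/3 \<le> 1")
      case True
      define \<beta> where "\<beta> = \<alpha> + e/3"
      have b01: "0 \<le> \<beta>" "\<beta> \<le> 1" using True bnd[OF f, of 0] e unfolding \<beta>_def \<alpha>_def by linarith+
      note mb = m[OF b01]
      have "(f, m \<beta>) \<notin> R" using repR[OF f, of "m \<beta>"] mb e unfolding \<beta>_def \<alpha>_def by simp
      then obtain U1 U2 where UU: "openin T U1" "openin T U2" "f \<in> U1" "m \<beta> \<in> U2"
         "\<forall>\<^sub>F n in sequentially. \<forall>g\<in>U1. \<forall>h\<in>U2. (g,h) \<notin> Rk n"
        using notLs[OF f] mb by blast
      show ?thesis
      proof (intro exI[of _ "U1 \<inter> W"] conjI)
        show "openin T (U1 \<inter> W)" using UU W by auto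
        show "f \<in> U1 \<inter> W" using UU W by auto
        show "\<forall>\<^sub>F n in sequentially. \<forall>g\<in>U1 \<inter> W. Vk n g < V g + e"
        proof (rule eventually_mono[OF UU(5)], intro ballI)
          fix n g assume H: "\<forall>g\<in>U1. \<forall>h\<in>U2. (g, h) \<notin> Rk n" and g: "g \<in> U1 \<inter> W"
          hence "(g, m \<beta>) \<notin> Rk n" using UU by auto
          moreover have "g \<in> topspace T" using g W_def by auto
          ultimately have "Vk n g < \<beta>" using repRk[of g "m \<beta>" n] mb by auto
          then show "Vk n g < V g + e" using g by (auto simp: W_def \<beta>_def)
        qed
      qed
    next
      case False
      show ?thesis
      proof (intro exI[of _ W] conjI W)
        show "\<forall>\<^sub>F n in sequentially. \<forall>g\<in>W. Vk n g < V g + e"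
        proof (intro always_eventually allI ballI)
          fix n g assume g: "g \<in> W"
          have "Vk n g \<le> 1" using bnd[of g n] g by (simp add: W_def)
          moreover have "\<alpha> - e/3 < V g" using g by (simp add: W_def)
          ultimately show "Vk n g < V g + e" using False e by linarith
        qed
      qed
    qed
    have lo: "\<exists>N2. openin T N2 \<and> f \<in> N2 \<and> (\<forall>\<^sub>F n in sequentially. \<forall>g\<in>N2. V g - e < Vk n g)"
    proof (cases "0 \<le> \<alpha> - e/3")
      case True
      define \<beta> where "\<beta> = \<alpha> - e/3"
      have b01: "0 \<le> \<beta>" "\<beta> \<le> 1" using True bnd[OF f, of 0] e unfolding \<beta>_def \<alpha>_def by linarith+
      note mb = m[OF b01]
      have "(m \<beta>, f) \<notin> R" using repR[OF _ f, of "m \<beta>"] mb e unfolding \<beta>_def \<alpha>_def by simp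
      then obtain U1 U2 where UU: "openin T U1" "openin T U2" "m \<beta> \<in> U1" "f \<in> U2"
         "\<forall>\<^sub>F n in sequentially. \<forall>g\<in>U1. \<forall>h\<in>U2. (g,h) \<notin> Rk n"
        using notLs[OF _ f] mb by blast
      show ?thesis
      proof (intro exI[of _ "U2 \<inter> W"] conjI)
        show "openin T (U2 \<inter> W)" using UU W by auto
        show "f \<in> U2 \<inter> W" using UU W by auto
        show "\<forall>\<^sub>F n in sequentially. \<forall>g\<in>U2 \<inter> W. V g - e < Vk n g"
        proof (rule eventually_mono[OF UU(5)], intro ballI)
          fix n g assume H: "\<forall>g\<in>U1. \<forall>h\<in>U2. (g, h) \<notin> Rk n" and g: "g \<in> U2 \<inter> W"
          hence "(m \<beta>, g) \<notin> Rk n" using UU by auto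
          moreover have "g \<in> topspace T" using g W_def by auto
          ultimately have "\<beta> < Vk n g" using repRk[of "m \<beta>" g n] mb by auto
          then show "V g - e < Vk n g" using g by (auto simp: W_def \<beta>_def)
        qed
      qed
    next
      case False
      show ?thesis
      proof (intro exI[of _ W] conjI W)
        show "\<forall>\<^sub>F n in sequentially. \<forall>g\<in>W. V g - e < Vk n g"
        proof (intro always_eventually allI ballI)
          fix n g assume g: "g \<in> W"
          have "0 \<le> Vk n g" using bnd[of g n] g by (simp add: W_def)
          moreover have "V g < \<alpha> + e/3" using g by (simp add: W_def)
          ultimately show "V g - e < Vk n g" using False e by linarith
        qed
      qed
    qed
    from up lo obtain N1 N2 where
      N1: "openin T N1" "f \<in> N1" "\<forall>\<^sub>F n in sequentially. \<forall>g\<in>N1. Vk n g < V g + e" and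
      N2: "openin T N2" "f \<in> N2" "\<forall>\<^sub>F n in sequentially. \<forall>g\<in>N2. V g - e < Vk n g" by blast
    have "\<forall>\<^sub>F n in sequentially. \<forall>g\<in>N1 \<inter> N2. \<bar>Vk n g - V g\<bar> < e"
    proof (rule eventually_mono[OF eventually_conj[OF N1(3) N2(3)]])
      fix n assume "(\<forall>g\<in>N1. Vk n g < V g + e) \<and> (\<forall>g\<in>N2. V g - e < Vk n g)"
      then show "\<forall>g\<in>N1 \<inter> N2. \<bar>Vk n g - V g\<bar> < e" by (auto simp: abs_less_iff)
    qed
    then have "P (N1 \<inter> N2)" unfolding P_def using N1 N2 by blast
    then show ?thesis using N1 N2 by blast
  qed
  have Ksub: "K \<subseteq> topspace T" using K compactin_subset_topspace by blast
  have "K \<subseteq> \<Union>{N. P N}" using key Ksub by blast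
  moreover have "\<forall>B\<in>{N. P N}. openin T B" by (simp add: P_def)
  ultimately have "\<exists>F. finite F \<and> F \<subseteq> {N. P N} \<and> K \<subseteq> \<Union>F"
    using K unfolding compactin_def by blast
  then obtain F where F: "finite F" "F \<subseteq> {N. P N}" "K \<subseteq> \<Union>F" by blast
  have evF: "\<forall>N\<in>F. \<forall>\<^sub>F n in sequentially. \<forall>g\<in>N. \<bar>Vk n g - V g\<bar> < e"
    using F(2) unfolding P_def by blast
  have "\<forall>\<^sub>F n in sequentially. \<forall>N\<in>F. \<forall>g\<in>N. \<bar>Vk n g - V g\<bar> < e"
    using eventually_ball_finite[OF F(1) evF] .
  then show "\<forall>\<^sub>F n in sequentially. \<forall>x\<in>K. dist (Vk n x) (V x) < e"
  proof (rule eventually_mono)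
    fix n assume H: "\<forall>N\<in>F. \<forall>g\<in>N. \<bar>Vk n g - V g\<bar> < e"
    show "\<forall>x\<in>K. dist (Vk n x) (V x) < e"
    proof
      fix x assume "x \<in> K"
      then obtain N where "N \<in> F" "x \<in> N" using F(3) by blast
      then show "dist (Vk n x) (V x) < e" using H by (simp add: dist_real_def)
    qed
  qed
qed


lemma calib:
  assumes "standard_rep a b V u" "a \<le> b" "0 \<le> \<beta>" "\<beta> \<le> 1"
  shows "V (\<lambda>_. mix a b \<beta>) = \<beta>"
proof -
  have u: "continuous_on {a..b} u" "u a = 0" "u b = 1" and Vc: "\<forall>p\<in>Delta a b. V (\<lambda>_. p) = integral\<^sup>L p u"
    using assms(1) unfolding standard_rep_def Uset_def by auto
  have "V (\<lambda>_. mix a b \<beta>) = integral\<^sup>L (mix a b \<beta>) u" using Vc mix_Delta[OF assms(2)] by blast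
  also have "\<dots> = \<beta> * u b + (1 - \<beta>) * u a" using mix_int[OF assms(2) u(1) assms(3,4)] .
  finally show ?thesis using u by simp
qed

lemma mixc_X: "a \<le> b \<Longrightarrow> (\<lambda>_. mix a b \<beta>) \<in> Xset a b"
  using mix_Delta by (simp add: Xset_eq)

lemma fosd_top: assumes "a \<le> b" "p \<in> Delta a b" shows "fosd a b (mix a b 1) p"
  unfolding fosd_def
proof (intro allI impI)
  fix h :: "real \<Rightarrow> real" assume h: "continuous_on {a..b} h \<and> mono_on {a..b} h"
  have "integral\<^sup>L (mix a b 1) h = h b" using mix_int[of a b h 1] h assms by simp
  then show "integral\<^sup>L p h \<le> integral\<^sup>L (mix a b 1) h"
    using Delta_int_bounds(3)[OF assms(2)] h assms(1) by simp
qed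

lemma fosd_bot: assumes "a \<le> b" "p \<in> Delta a b" shows "fosd a b p (mix a b 0)"
  unfolding fosd_def
proof (intro allI impI)
  fix h :: "real \<Rightarrow> real" assume h: "continuous_on {a..b} h \<and> mono_on {a..b} h"
  have "integral\<^sup>L (mix a b 0) h = h a" using mix_int[of a b h 0] h assms by simp
  then show "integral\<^sup>L (mix a b 0) h \<le> integral\<^sup>L p h"
    using Delta_int_bounds(2)[OF assms(2)] h assms(1) by simp
qed

lemma V_bounds:
  fixes R :: "(('s::finite) act \<times> 's act) set"
  assumes "a \<le> b" "weakly_monotone a b R" "represents a b R V" "standard_rep a b V u"
    and f: "f \<in> Xset a b"
  shows "0 \<le> V f \<and> V f \<le> 1"
proof -
  have fs: "\<And>s. f s \<in> Delta a b" using f by (simp add: Xset_eq)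
  have "fosd_act a b (\<lambda>_. mix a b 1) f" unfolding fosd_act_def using fosd_top[OF assms(1) fs] by blast
  then have "((\<lambda>_. mix a b 1), f) \<in> R" using assms(2) mixc_X[OF assms(1)] f unfolding weakly_monotone_def by blast
  then have 1: "V f \<le> V (\<lambda>_. mix a b 1)" using assms(3) mixc_X[OF assms(1)] f unfolding represents_def by blast
  have "fosd_act a b f (\<lambda>_. mix a b 0)" unfolding fosd_act_def using fosd_bot[OF assms(1) fs] by blast
  then have "(f, (\<lambda>_. mix a b 0)) \<in> R" using assms(2) mixc_X[OF assms(1)] f unfolding weakly_monotone_def by blast
  then have 2: "V (\<lambda>_. mix a b 0) \<le> V f" using assms(3) mixc_X[OF assms(1)] f unfolding represents_def by blast
  show ?thesis using 1 2 calib[OF assms(4,1), of 0] calib[OF assms(4,1), of 1] by simp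
qed

theorem mainTheorem8:
  fixes a b :: real
    and B :: "nat \<Rightarrow> ('s::finite) act set"
    and R :: "('s act \<times> 's act) set"
    and Rk :: "nat \<Rightarrow> ('s act \<times> 's act) set"
    and V :: "'s act \<Rightarrow> real" and u :: "real \<Rightarrow> real"
    and Vk :: "nat \<Rightarrow> 's act \<Rightarrow> real" and uk :: "nat \<Rightarrow> real \<Rightarrow> real"
  assumes "a < b"
    and "seq_experiments a b B"
    and "recovers a b B"
    and "preference a b R" and "weakly_monotone a b R"
    and "\<And>k. preference a b (Rk k)" and "\<And>k. weakly_monotone a b (Rk k)"
    and "\<And>k. strongly_rationalizes (Rk k) B k (choice R)"
    and "standard_rep a b V u" and "represents a b R V"
    and "\<And>k. standard_rep a b (Vk k) (uk k)" and "\<And>k. represents a b (Rk k) (Vk k)"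
  shows "(\<forall>K. compactin (Xtop a b) K \<longrightarrow> uniform_limit K Vk V sequentially)
         \<and> uniform_limit {a..b} uk u sequentially"
proof -
  have ab: "a \<le> b" using assms(1) by simp
  have cc: "closed_conv (prod_topology (Xtop a b) (Xtop a b)) Rk R"
    using assms(3) assms(4-8) unfolding recovers_def by blast
  then have Ls: "Ls (prod_topology (Xtop a b) (Xtop a b)) Rk = R" by (simp add: closed_conv_def)
  have Vc: "continuous_map (Xtop a b) euclideanreal V" using assms(9) by (simp add: standard_rep_def)
  have UL: "uniform_limit K Vk V sequentially" if K: "compactin (Xtop a b) K" for K
  proof (rule abstract_unif[OF Ls Vc _ _ _ _ K, where m="\<lambda>\<beta> _. mix a b \<beta>"])
    show "\<And>f g. f \<in> Xset a b \<Longrightarrow> g \<in> Xset a b \<Longrightarrow> (f, g) \<in> R \<longleftrightarrow> V g \<le> V f"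
      using assms(10) unfolding represents_def by blast
    show "\<And>k f g. f \<in> Xset a b \<Longrightarrow> g \<in> Xset a b \<Longrightarrow> (f, g) \<in> Rk k \<longleftrightarrow> Vk k g \<le> Vk k f"
      using assms(12) unfolding represents_def by blast
    show "\<And>\<beta>. 0 \<le> \<beta> \<Longrightarrow> \<beta> \<le> 1 \<Longrightarrow> (\<lambda>_. mix a b \<beta>) \<in> Xset a b \<and> V (\<lambda>_. mix a b \<beta>) = \<beta> \<and> (\<forall>k. Vk k (\<lambda>_. mix a b \<beta>) = \<beta>)"
      using mixc_X[OF ab] calib[OF assms(9) ab] calib[OF assms(11) ab] by blast
    show "\<And>f k. f \<in> Xset a b \<Longrightarrow> 0 \<le> Vk k f \<and> Vk k f \<le> 1 \<and> 0 \<le> V f \<and> V f \<le> 1"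
      using V_bounds[OF ab assms(5) assms(10) assms(9)] V_bounds[OF ab assms(7) assms(12) assms(11)] by blast
  qed
  define K0 where "K0 = (\<lambda>x (_::'s). dl a b x) ` {a..b}"
  have "compactin (top_of_set {a..b}) {a..b}"
    by (simp add: compactin_subtopology compactin_euclidean_iff)
  then have "compactin (Xtop a b) K0" unfolding K0_def by (rule image_compactin[OF _ dl_cont])
  then have UK0: "uniform_limit K0 Vk V sequentially" by (rule UL)
  have eqs: "Vk n (\<lambda>_. dl a b x) = uk n x" "V (\<lambda>_. dl a b x) = u x" if x: "x \<in> {a..b}" for n x
  proof -
    have "continuous_on {a..b} (uk n)" "\<forall>p\<in>Delta a b. Vk n (\<lambda>_. p) = integral\<^sup>L p (uk n)"
      using assms(11)[of n] unfolding standard_rep_def Uset_def by auto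
    then show "Vk n (\<lambda>_. dl a b x) = uk n x" using dl_Delta[OF x] dl_int[OF x] by simp
    have "continuous_on {a..b} u" "\<forall>p\<in>Delta a b. V (\<lambda>_. p) = integral\<^sup>L p u"
      using assms(9) unfolding standard_rep_def Uset_def by auto
    then show "V (\<lambda>_. dl a b x) = u x" using dl_Delta[OF x] dl_int[OF x] by simp
  qed
  have "uniform_limit {a..b} uk u sequentially"
    unfolding uniform_limit_iff
  proof (intro allI impI)
    fix e :: real assume "e > 0"
    then have "\<forall>\<^sub>F n in sequentially. \<forall>f\<in>K0. dist (Vk n f) (V f) < e"
      using UK0 unfolding uniform_limit_iff by blast
    then show "\<forall>\<^sub>F n in sequentially. \<forall>x\<in>{a..b}. dist (uk n x) (u x) < e"
    proof (rule eventually_mono)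
      fix n assume H: "\<forall>f\<in>K0. dist (Vk n f) (V f) < e"
      show "\<forall>x\<in>{a..b}. dist (uk n x) (u x) < e"
      proof
        fix x assume x: "x \<in> {a..b}"
        have "(\<lambda>_. dl a b x) \<in> K0" unfolding K0_def using x by blast
        then show "dist (uk n x) (u x) < e" using H eqs[OF x] by fastforce
      qed
    qed
  qed
  then show ?thesis using UL by blast
qed

end
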